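(* Let $b>0$, $\Delta>0$, $\sigma_\theta^2>0$ be real numbers and define $$E_1(a)=\begin{cases}\dfrac{b-\sqrt{\tfrac{b^2-\Delta a+\sqrt{(b^2-\Delta a)^2+\sigma_\theta^2a^2}}{2}}}{a}, & a\neq0,\\[1ex] \dfrac{\Delta}{2b}, & a=0,\end{cases}$$ and $\bar a=\frac{4b^2\Delta}{\sigma_\theta^2}$. Then $E_1(a)>0$ if and only if $a<\bar a$, and on the region $a<\bar a$ the function $E_1$ has a unique maximizer $a^\dagger$. Moreover, $a^\dagger>0$ iff $\sigma_\theta^2<\Delta^2$, $a^\dagger=0$ iff $\sigma_\theta^2=\Delta^2$, and $a^\dagger<0$ iff $\sigma_\theta^2>\Delta^2$. Finally, $a^\dagger<\frac{2b^2\Delta}{\Delta^2+\sigma_\theta^2}<\bar a$.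
   Context: $E_1(a)$ is the expected effort in the affine symmetric Bayesian equilibrium of the cubic contest, where $\Delta=c-E[\theta]$ and $\sigma_\theta^2$ is the type variance. *)

theory Defs
  imports Complex_Main
begin

text \<open>Expected effort E_1(a); parameters b, Delta = c - E[theta], and s = sigma_theta^2 (type variance).\<close>
definition E1 :: "real \<Rightarrow> real \<Rightarrow> real \<Rightarrow> real \<Rightarrow> real" where
  "E1 b \<Delta> s a =
     (if a \<noteq> 0 then
        (b - sqrt ((b\<^sup>2 - \<Delta> * a + sqrt ((b\<^sup>2 - \<Delta> * a)\<^sup>2 + s * a\<^sup>2)) / 2)) / a
      else \<Delta> / (2 * b))"

definition abar :: "real \<Rightarrow> real \<Rightarrow> real \<Rightarrow> real" where
  "abar b \<Delta> s = 4 * b\<^sup>2 * \<Delta> / s"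

end

theory Submission
  imports Defs
begin



definition Rf :: "real \<Rightarrow> real \<Rightarrow> real \<Rightarrow> real \<Rightarrow> real" where
  "Rf b D s a = sqrt ((b\<^sup>2 - D * a)\<^sup>2 + s * a\<^sup>2)"
definition Yf :: "real \<Rightarrow> real \<Rightarrow> real \<Rightarrow> real \<Rightarrow> real" where
  "Yf b D s a = sqrt ((b\<^sup>2 - D * a + Rf b D s a) / 2)"
definition Pf :: "real \<Rightarrow> real \<Rightarrow> real \<Rightarrow> real \<Rightarrow> real \<Rightarrow> real" where
  "Pf b D s e a = 4 * (b - a*e)\<^sup>2 * (D - 2*b*e + a*e\<^sup>2) - s * a"
definition Df :: "real \<Rightarrow> real \<Rightarrow> real \<Rightarrow> real \<Rightarrow> real \<Rightarrow> real" where
  "Df b D s e a = 2 * ((b - a*e) + Yf b D s a) * (2*(b - a*e)\<^sup>2 - (b\<^sup>2 - D*a) + Rf b D s a)"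

lemma Rf_props:
  assumes "s > 0"
  shows "(Rf b D s a)\<^sup>2 = (b\<^sup>2 - D * a)\<^sup>2 + s * a\<^sup>2" "Rf b D s a \<ge> \<bar>b\<^sup>2 - D * a\<bar>"
    "a \<noteq> 0 \<Longrightarrow> Rf b D s a > \<bar>b\<^sup>2 - D * a\<bar>"
proof -
  have nn: "(b\<^sup>2 - D * a)\<^sup>2 + s * a\<^sup>2 \<ge> 0" using assms by simp
  show "(Rf b D s a)\<^sup>2 = (b\<^sup>2 - D * a)\<^sup>2 + s * a\<^sup>2" unfolding Rf_def using nn by simp
  have "\<bar>b\<^sup>2 - D * a\<bar> = sqrt ((b\<^sup>2 - D * a)\<^sup>2)" by simp
  also have "\<dots> \<le> Rf b D s a" unfolding Rf_def by (rule real_sqrt_le_mono) (use assms in simp)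
  finally show "Rf b D s a \<ge> \<bar>b\<^sup>2 - D * a\<bar>" .
  assume "a \<noteq> 0"
  have "\<bar>b\<^sup>2 - D * a\<bar> = sqrt ((b\<^sup>2 - D * a)\<^sup>2)" by simp
  also have "\<dots> < Rf b D s a" unfolding Rf_def by (rule real_sqrt_less_mono) (use assms \<open>a \<noteq> 0\<close> in simp)
  finally show "Rf b D s a > \<bar>b\<^sup>2 - D * a\<bar>" .
qed

lemma Rf0: "b > 0 \<Longrightarrow> Rf b D s 0 = b\<^sup>2"
proof -
  have "Rf b D s 0 = sqrt ((b\<^sup>2)\<^sup>2)" unfolding Rf_def by simp
  also have "\<dots> = b\<^sup>2" by (simp only: real_sqrt_abs) simp
  finally show ?thesis .
qed
lemma Yf0: "b > 0 \<Longrightarrow> Yf b D s 0 = b" unfolding Yf_def by (simp add: Rf0)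

lemma Yf_props:
  assumes "s > 0" "b > 0"
  shows "(Yf b D s a)\<^sup>2 = (b\<^sup>2 - D * a + Rf b D s a) / 2" "Yf b D s a > 0"
proof -
  have "b\<^sup>2 - D * a + Rf b D s a \<ge> 0" using Rf_props(2)[OF assms(1), of b D a] by linarith
  then show "(Yf b D s a)\<^sup>2 = (b\<^sup>2 - D * a + Rf b D s a) / 2" unfolding Yf_def by simp
  show "Yf b D s a > 0"
  proof (cases "a = 0")
    case True then show ?thesis using Yf0 assms by simp
  next
    case False
    have "b\<^sup>2 - D * a + Rf b D s a > 0" using Rf_props(3)[OF assms(1) False, of b D] by linarith
    then show ?thesis unfolding Yf_def by simp
  qed
qed

lemma Df_pos:
  assumes "s > 0" "b > 0" "b - a*e > 0"
  shows "Df b D s e a > 0"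
proof -
  have "Rf b D s a \<ge> \<bar>b\<^sup>2 - D * a\<bar>" using Rf_props(2)[OF assms(1)] .
  then have "2*(b - a*e)\<^sup>2 - (b\<^sup>2 - D*a) + Rf b D s a > 0" using assms(3) by (smt (verit) zero_less_power)
  moreover have "(b - a*e) + Yf b D s a > 0" using Yf_props(2)[OF assms(1,2), of D a] assms(3) by linarith
  ultimately show ?thesis unfolding Df_def by simp
qed

lemma key:
  assumes "s > 0" "b > 0" "b - a*e > 0"
  shows "E1 b D s a - e = Pf b D s e a / Df b D s e a"
proof (cases "a = 0")
  case True
  then show ?thesis using assms unfolding E1_def Pf_def Df_def
    by (simp add: Rf0 Yf0 field_simps power2_eq_square)
next
  case False
  define c where "c = b - a*e"
  define u where "u = b\<^sup>2 - D * a"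
  define R where "R = Rf b D s a"
  define Y where "Y = Yf b D s a"
  have R2: "R\<^sup>2 = u\<^sup>2 + s * a\<^sup>2" using Rf_props(1)[OF assms(1)] unfolding R_def u_def .
  have Y2: "Y\<^sup>2 = (u + R)/2" using Yf_props(1)[OF assms(1,2)] unfolding Y_def u_def R_def .
  have Dpos: "Df b D s e a > 0" using Df_pos[OF assms] .
  have Dd: "Df b D s e a = 2 * (c + Y) * (2*c\<^sup>2 - u + R)" unfolding Df_def c_def Y_def u_def R_def by simp
  have Pd: "Pf b D s e a = 4 * c\<^sup>2 * (D - 2*b*e + a*e\<^sup>2) - s * a" unfolding Pf_def c_def by simp
  have E: "E1 b D s a - e = (c - Y) / a" unfolding E1_def c_def Y_def R_def u_def using False
    by (simp add: Yf_def Rf_def field_simps)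
  have cu: "c\<^sup>2 - u = a * (D - 2*b*e + a*e\<^sup>2)" unfolding c_def u_def by (simp add: power2_eq_square algebra_simps)
  have "(c - Y) * (2 * (c + Y) * (2*c\<^sup>2 - u + R)) = (2*c\<^sup>2 - 2*Y\<^sup>2) * (2*c\<^sup>2 - u + R)"
    by (simp add: power2_eq_square algebra_simps)
  also have "\<dots> = (2*c\<^sup>2 - u)\<^sup>2 - R\<^sup>2" using Y2 by (simp add: power2_eq_square algebra_simps)
  also have "\<dots> = 4*c\<^sup>2*(c\<^sup>2 - u) - s*a\<^sup>2" using R2 by (simp add: power2_eq_square algebra_simps)
  also have "\<dots> = 4*c\<^sup>2*(a * (D - 2*b*e + a*e\<^sup>2)) - s*a\<^sup>2" using cu by simp
  also have "\<dots> = a * (4 * c\<^sup>2 * (D - 2*b*e + a*e\<^sup>2) - s * a)" by (simp add: power2_eq_square algebra_simps)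
  also have "\<dots> = a * Pf b D s e a" using Pd by simp
  finally have eq: "(c - Y) * Df b D s e a = a * Pf b D s e a" using Dd by simp
  have "(c - Y) / a = Pf b D s e a / Df b D s e a"
    using eq Dpos False by (subst frac_eq_eq) (auto simp: mult.commute)
  then show ?thesis using E by simp
qed

lemma below:
  assumes "s > 0" "b > 0" "e > 0" "b - a*e \<le> 0"
  shows "E1 b D s a < e"
proof -
  have a: "a > 0" using assms by (smt (verit) mult_nonpos_nonneg)
  have "Yf b D s a > 0" using Yf_props(2)[OF assms(1,2)] .
  then have "(b - Yf b D s a) < a * e" using assms by linarith
  then show ?thesis using a unfolding E1_def by (simp add: Yf_def Rf_def field_simps)
qed




lemma dd:
  fixes x0 x1 x2 x3 k3 k2 k1 k0 :: real
  defines "p \<equiv> \<lambda>x. k3*x^3 + k2*x^2 + k1*x + k0"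
  shows "k3 * ((x1-x0)*(x2-x0)*(x3-x0)*(x2-x1)*(x3-x1)*(x3-x2)) =
     - p x0 * ((x2-x1)*(x3-x1)*(x3-x2)) + p x1 * ((x2-x0)*(x3-x0)*(x3-x2))
     - p x2 * ((x1-x0)*(x3-x0)*(x3-x1)) + p x3 * ((x1-x0)*(x2-x0)*(x2-x1))"
  unfolding p_def by (simp add: algebra_simps power2_eq_square power3_eq_cube)

lemma Pf_poly: "Pf b D s e a = (4*e^4)*a^3 + (4*(e\<^sup>2*(D-2*b*e) - 2*b*e^3))*a^2
   + (4*(b\<^sup>2*e\<^sup>2 - 2*b*e*(D-2*b*e)) - s)*a + 4*b\<^sup>2*(D-2*b*e)"
  unfolding Pf_def by (simp add: algebra_simps power2_eq_square power3_eq_cube power4_eq_xxxx)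

lemma dd_P:
  shows "4*e^4 * ((x1-x0)*(x2-x0)*(x3-x0)*(x2-x1)*(x3-x1)*(x3-x2)) =
     - Pf b D s e x0 * ((x2-x1)*(x3-x1)*(x3-x2)) + Pf b D s e x1 * ((x2-x0)*(x3-x0)*(x3-x2))
     - Pf b D s e x2 * ((x1-x0)*(x3-x0)*(x3-x1)) + Pf b D s e x3 * ((x1-x0)*(x2-x0)*(x2-x1))"
  unfolding Pf_poly by (rule dd)




lemma sign_ge:
  assumes "s > 0" "b > 0" "b - a*e > 0"
  shows "(e \<le> E1 b D s a) = (0 \<le> Pf b D s e a)"
proof -
  have D: "Df b D s e a > 0" using Df_pos[OF assms] .
  have "(e \<le> E1 b D s a) = (0 \<le> E1 b D s a - e)" by simp
  also have "\<dots> = (0 \<le> Pf b D s e a / Df b D s e a)" using key[OF assms] by simp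
  also have "\<dots> = (0 \<le> Pf b D s e a)" using D by (simp add: zero_le_divide_iff)
  finally show ?thesis .
qed

lemma sign_gt:
  assumes "s > 0" "b > 0" "b - a*e > 0"
  shows "(e < E1 b D s a) = (0 < Pf b D s e a)"
proof -
  have D: "Df b D s e a > 0" using Df_pos[OF assms] .
  have "(e < E1 b D s a) = (0 < E1 b D s a - e)" by simp
  also have "\<dots> = (0 < Pf b D s e a / Df b D s e a)" using key[OF assms] by simp
  also have "\<dots> = (0 < Pf b D s e a)" using D by (simp add: zero_less_divide_iff)
  finally show ?thesis .
qed

lemma qc:
  assumes s: "s > 0" and b: "b > 0" and e: "e > 0" and xy: "x < y" and yz: "y < z"
    and Ex: "E1 b D s x \<ge> e" and Ez: "E1 b D s z \<ge> e"
  shows "E1 b D s y \<ge> e"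
proof (rule ccontr)
  assume Ey: "\<not> E1 b D s y \<ge> e"
  have cz: "b - z*e > 0" using below[OF s b e, of z D] Ez by linarith
  have "x*e < z*e" "y*e < z*e" using xy yz e by auto
  then have cx: "b - x*e > 0" and cy: "b - y*e > 0" using cz by auto
  have Px: "Pf b D s e x \<ge> 0" using sign_ge[OF s b cx] Ex by simp
  have Pz: "Pf b D s e z \<ge> 0" using sign_ge[OF s b cz] Ez by simp
  have Py: "Pf b D s e y < 0" using sign_ge[OF s b cy] Ey by simp
  define w where "w = b / e"
  have bw: "b - w*e = 0" unfolding w_def using e by simp
  have w: "w > 0" unfolding w_def using b e by simp
  have Pw: "Pf b D s e w < 0" unfolding Pf_def using bw w s by simp
  have zw: "z < w" using cz bw e by (smt (verit) mult_right_mono)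
  have id: "4*e^4 * ((y-x)*(z-x)*(w-x)*(z-y)*(w-y)*(w-z)) =
     - Pf b D s e x * ((z-y)*(w-y)*(w-z)) + Pf b D s e y * ((z-x)*(w-x)*(w-z))
     - Pf b D s e z * ((y-x)*(w-x)*(w-y)) + Pf b D s e w * ((y-x)*(z-x)*(z-y))"
    by (rule dd_P)
  have p1: "(z-y)*(w-y)*(w-z) > 0" "(z-x)*(w-x)*(w-z) > 0" "(y-x)*(w-x)*(w-y) > 0"
    "(y-x)*(z-x)*(z-y) > 0" "4*e^4 * ((y-x)*(z-x)*(w-x)*(z-y)*(w-y)*(w-z)) > 0"
    using xy yz zw e by auto
  have t1: "Pf b D s e x * ((z-y)*(w-y)*(w-z)) \<ge> 0" using Px p1(1) by simp
  have t2: "Pf b D s e y * ((z-x)*(w-x)*(w-z)) < 0" using Py p1(2) by (simp add: mult_neg_pos)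
  have t3: "Pf b D s e z * ((y-x)*(w-x)*(w-y)) \<ge> 0" using Pz p1(3) by simp
  have t4: "Pf b D s e w * ((y-x)*(z-x)*(z-y)) < 0" using Pw p1(4) by (simp add: mult_neg_pos)
  show False using id p1(5) t1 t2 t3 t4 by linarith
qed

lemma P_e0: "b > 0 \<Longrightarrow> Pf b D s (D/(2*b)) a = a * (4*(b - a*(D/(2*b)))\<^sup>2*(D/(2*b))\<^sup>2 - s)"
  unfolding Pf_def by (simp add: field_simps power2_eq_square)

lemma E1_formula:
  assumes "s > 0" "b > 0"
  shows "E1 b D s = (\<lambda>a. (4*b\<^sup>2*D - s*a) / (2 * (b + Yf b D s a) * (b\<^sup>2 + D*a + Rf b D s a)))"
proof
  fix a
  have "E1 b D s a - 0 = Pf b D s 0 a / Df b D s 0 a" using key[OF assms, of a 0] assms by simp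
  moreover have "Pf b D s 0 a = 4*b\<^sup>2*D - s*a" unfolding Pf_def by simp
  moreover have "Df b D s 0 a = 2 * (b + Yf b D s a) * (b\<^sup>2 + D*a + Rf b D s a)"
    unfolding Df_def by (simp add: algebra_simps)
  ultimately show "E1 b D s a = (4*b\<^sup>2*D - s*a) / (2 * (b + Yf b D s a) * (b\<^sup>2 + D*a + Rf b D s a))" by simp
qed

lemma Rf_cont: "continuous_on A (Rf b D s)"
  unfolding Rf_def by (intro continuous_intros)

lemma Yf_cont: "continuous_on A (Yf b D s)"
  unfolding Yf_def by (intro continuous_intros Rf_cont) auto

lemma E1_cont:
  assumes "s > 0" "b > 0"
  shows "continuous_on A (E1 b D s)"
proof -
  have pos: "Df b D s 0 a > 0" for a using Df_pos[OF assms, of a 0] assms by simp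
  have eqD: "Df b D s 0 a = 2 * (b + Yf b D s a) * (b\<^sup>2 + D*a + Rf b D s a)" for a
    unfolding Df_def by (simp add: algebra_simps)
  have nz: "\<forall>a\<in>A. 2 * (b + Yf b D s a) * (b\<^sup>2 + D*a + Rf b D s a) \<noteq> 0"
    using pos eqD by (metis less_irrefl)
  have c: "continuous_on A (\<lambda>a. 2 * (b + Yf b D s a) * (b\<^sup>2 + D*a + Rf b D s a))"
    by (intro continuous_intros Yf_cont Rf_cont)
  have c2: "continuous_on A (\<lambda>a. 4*b\<^sup>2*D - s*a)" by (intro continuous_intros)
  show ?thesis unfolding E1_formula[OF assms]
    by (rule continuous_on_divide[OF c2 c nz])
qed




lemma no_two_max:
  assumes s: "s > 0" and b: "b > 0" and D: "D > 0"
    and lt: "a1 < a2" and a2ab: "a2 < abar b D s"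
    and m1: "\<forall>a. a < abar b D s \<longrightarrow> E1 b D s a \<le> E1 b D s a1"
    and m2: "\<forall>a. a < abar b D s \<longrightarrow> E1 b D s a \<le> E1 b D s a2"
  shows False
proof -
  define M where "M = E1 b D s a1"
  have ab: "abar b D s > 0" unfolding abar_def using s b D by simp
  have a1ab: "a1 < abar b D s" using lt a2ab by simp
  have M2: "E1 b D s a2 = M" unfolding M_def using m1 m2 a1ab a2ab by (meson order_antisym)
  have "E1 b D s 0 \<le> M" unfolding M_def using m1 ab by simp
  moreover have "E1 b D s 0 = D/(2*b)" unfolding E1_def by simp
  ultimately have Mpos: "M > 0" using b D by (smt (verit) divide_pos_pos)
  have EqM: "E1 b D s y = M" if "a1 \<le> y" "y \<le> a2" for y
  proof (cases "y = a1 \<or> y = a2")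
    case True then show ?thesis using M2 M_def by auto
  next
    case False
    then have "a1 < y" "y < a2" using that by auto
    then have "E1 b D s y \<ge> M" using qc[OF s b Mpos] M2 M_def by simp
    moreover have "E1 b D s y \<le> M" using m1 that a2ab M_def by simp
    ultimately show ?thesis by simp
  qed
  have P0: "Pf b D s M y = 0" if "a1 \<le> y" "y \<le> a2" for y
  proof -
    have c: "b - y*M > 0" using below[OF s b Mpos, of y D] EqM[OF that] by linarith
    have "Pf b D s M y / Df b D s M y = 0" using key[OF s b c, of D] EqM[OF that] by simp
    then show ?thesis using Df_pos[OF s b c, of D] by simp
  qed
  define h where "h = (a2 - a1)/3"
  have h: "h > 0" unfolding h_def using lt by simp
  have pts: "a1 \<le> a1" "a1 \<le> a1 + h" "a1 + h \<le> a2" "a1 \<le> a1 + 2*h" "a1 + 2*h \<le> a2" "a1 \<le> a2"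
    using h lt unfolding h_def by (auto simp: field_simps)
  have id: "4*M^4 * (((a1+h)-a1)*((a1+2*h)-a1)*(a2-a1)*((a1+2*h)-(a1+h))*(a2-(a1+h))*(a2-(a1+2*h))) =
     - Pf b D s M a1 * (((a1+2*h)-(a1+h))*(a2-(a1+h))*(a2-(a1+2*h)))
     + Pf b D s M (a1+h) * (((a1+2*h)-a1)*(a2-a1)*(a2-(a1+2*h)))
     - Pf b D s M (a1+2*h) * (((a1+h)-a1)*(a2-a1)*(a2-(a1+h)))
     + Pf b D s M a2 * (((a1+h)-a1)*((a1+2*h)-a1)*((a1+2*h)-(a1+h)))"
    by (rule dd_P)
  also have "\<dots> = 0" using P0 pts by simp
  finally have z: "4*M^4 * (((a1+h)-a1)*((a1+2*h)-a1)*(a2-a1)*((a1+2*h)-(a1+h))*(a2-(a1+h))*(a2-(a1+2*h))) = 0" .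
  have "a2 - (a1 + h) > 0" "a2 - (a1 + 2*h) > 0" using h lt unfolding h_def by (auto simp: field_simps)
  then have "4*M^4 * (((a1+h)-a1)*((a1+2*h)-a1)*(a2-a1)*((a1+2*h)-(a1+h))*(a2-(a1+h))*(a2-(a1+2*h))) > 0"
    using Mpos h lt by simp
  then show False using z by linarith
qed

lemma unique_max:
  assumes s: "s > 0" and b: "b > 0" and D: "D > 0"
    and "a1 < abar b D s" "a2 < abar b D s"
    and "\<forall>a. a < abar b D s \<longrightarrow> E1 b D s a \<le> E1 b D s a1"
    and "\<forall>a. a < abar b D s \<longrightarrow> E1 b D s a \<le> E1 b D s a2"
  shows "a1 = a2"
proof (rule linorder_cases[of a1 a2])
  assume "a1 < a2" then show ?thesis using no_two_max[OF s b D _ assms(5) assms(6,7)] by simp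
next
  assume "a2 < a1" then show ?thesis using no_two_max[OF s b D _ assms(4) assms(7,6)] by simp
qed




lemma pos_iff:
  assumes s: "s > 0" and b: "b > 0" and D: "D > 0"
  shows "E1 b D s a > 0 \<longleftrightarrow> a < abar b D s"
proof -
  have c: "b - a*0 > 0" using b by simp
  have "(0 < E1 b D s a) = (0 < Pf b D s 0 a)" by (rule sign_gt[OF s b c])
  also have "\<dots> = (s * a < 4*b\<^sup>2*D)" unfolding Pf_def by simp
  also have "\<dots> = (a < abar b D s)" unfolding abar_def using s by (simp add: pos_less_divide_eq mult.commute)
  finally show ?thesis .
qed

lemma E0: "E1 b D s 0 = D/(2*b)" unfolding E1_def by simp

lemma exists_max:
  assumes s: "s > 0" and b: "b > 0" and D: "D > 0"
  shows "\<exists>am. am < abar b D s \<and> (\<forall>a. a < abar b D s \<longrightarrow> E1 b D s a \<le> E1 b D s am)"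
proof -
  define e0 where "e0 = D/(2*b)"
  have e0: "e0 > 0" unfolding e0_def using b D by simp
  define L where "L = -(s+1)/e0\<^sup>2"
  have L: "L \<le> 0" unfolding L_def using s by (intro divide_nonpos_nonneg) auto
  have ab: "abar b D s > 0" unfolding abar_def using s b D by simp
  have ne: "{L..abar b D s} \<noteq> {}" using L ab by simp
  from continuous_attains_sup[OF compact_Icc ne E1_cont[OF s b]]
  obtain am where am: "am \<in> {L..abar b D s}" and amx: "\<forall>y\<in>{L..abar b D s}. E1 b D s y \<le> E1 b D s am"
    by blast
  have "0 \<in> {L..abar b D s}" using L ab by simp
  then have "E1 b D s 0 \<le> E1 b D s am" using amx by blast
  then have Eam: "E1 b D s am \<ge> e0" using E0 e0_def by simp
  then have "E1 b D s am > 0" using e0 by simp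
  then have amab: "am < abar b D s" using pos_iff[OF s b D] by simp
  have low: "E1 b D s a \<le> e0" if "a < L" for a
  proof -
    have a: "a < 0" using that L by simp
    have c: "b - a*e0 > 0" using a e0 b by (smt (verit) mult_neg_pos)
    have "-a * e0\<^sup>2 > s + 1"
    proof -
      have "a * e0\<^sup>2 < L * e0\<^sup>2" using that e0 by simp
      also have "L * e0\<^sup>2 = -(s+1)" unfolding L_def using e0 by simp
      finally show ?thesis by simp
    qed
    moreover have "(b - a*e0)*e0 = b*e0 + (-a*e0\<^sup>2)" by (simp add: algebra_simps power2_eq_square)
    moreover have "b*e0 > 0" using b e0 by simp
    ultimately have ce: "(b - a*e0)*e0 > s + 1" by linarith
    have "(s+1)^2 < ((b - a*e0)*e0)^2" by (rule power_strict_mono[OF ce]) (use s in auto)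
    moreover have "(s+1)\<^sup>2 \<ge> s" using s by (simp add: power2_eq_square algebra_simps)
    moreover have "((b - a*e0)*e0)^2 = (b - a*e0)\<^sup>2*e0\<^sup>2" by (simp add: power_mult_distrib)
    moreover have "4*(b - a*e0)\<^sup>2*e0\<^sup>2 = 4*((b - a*e0)\<^sup>2*e0\<^sup>2)" by simp
    ultimately have "4*(b - a*e0)\<^sup>2*e0\<^sup>2 - s > 0" using s by linarith
    moreover have "Pf b D s e0 a = a * (4*(b - a*e0)\<^sup>2*e0\<^sup>2 - s)"
      unfolding e0_def by (rule P_e0[OF b])
    ultimately have "Pf b D s e0 a < 0" using a by (simp add: mult_neg_pos)
    then show ?thesis using sign_gt[OF s b c, of D] by simp
  qed
  have "\<forall>a. a < abar b D s \<longrightarrow> E1 b D s a \<le> E1 b D s am"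
  proof (intro allI impI)
    fix a assume "a < abar b D s"
    show "E1 b D s a \<le> E1 b D s am"
    proof (cases "a < L")
      case True then show ?thesis using low[OF True] Eam by linarith
    next
      case False then have "a \<in> {L..abar b D s}" using \<open>a < abar b D s\<close> by simp
      then show ?thesis using amx by blast
    qed
  qed
  then show ?thesis using amab by blast
qed




lemma ce_aux: "b > 0 \<Longrightarrow> D > 0 \<Longrightarrow> (b - (b\<^sup>2*(D - \<sigma>)/D\<^sup>2)*(D/(2*b)))*(D/(2*b)) = (D + \<sigma>)/4"
  for b D \<sigma> :: real
  by (simp add: field_simps power2_eq_square)

lemma better_point:
  assumes s: "s > 0" and b: "b > 0" and D: "D > 0" and ne: "sqrt s \<noteq> D"
  shows "E1 b D s (b\<^sup>2*(D - sqrt s)/D\<^sup>2) > D/(2*b)"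
proof -
  define e0 where "e0 = D/(2*b)"
  define \<sigma> where "\<sigma> = sqrt s"
  define a1 where "a1 = b\<^sup>2*(D - \<sigma>)/D\<^sup>2"
  have e0: "e0 > 0" unfolding e0_def using b D by simp
  have sg: "\<sigma> \<ge> 0" "\<sigma>\<^sup>2 = s" unfolding \<sigma>_def using s by auto
  have ce: "(b - a1*e0)*e0 = (D + \<sigma>)/4" unfolding a1_def e0_def using b D by (rule ce_aux)
  have c: "b - a1*e0 > 0"
  proof -
    have "(b - a1*e0)*e0 > 0" using ce sg D by simp
    then show ?thesis using e0 by (simp add: zero_less_mult_iff)
  qed
  have P1: "Pf b D s e0 a1 = a1 * (4*(b - a1*e0)\<^sup>2*e0\<^sup>2 - s)" unfolding e0_def by (rule P_e0[OF b])
  have q1: "4*(b - a1*e0)\<^sup>2*e0\<^sup>2 = 4*((b - a1*e0)*e0)\<^sup>2" by (simp add: power_mult_distrib)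
  have q2: "4*((b - a1*e0)*e0)\<^sup>2 = (D + \<sigma>)\<^sup>2/4" unfolding ce by (simp add: power2_eq_square)
  have q3: "(D + \<sigma>)\<^sup>2/4 - s = (D - \<sigma>) * (D + 3*\<sigma>) / 4" using sg(2)[symmetric]
    by (simp add: power2_eq_square algebra_simps)
  have P: "Pf b D s e0 a1 = a1 * ((D - \<sigma>) * (D + 3*\<sigma>) / 4)" using P1 q1 q2 q3 by simp
  have "a1 * ((D - \<sigma>) * (D + 3*\<sigma>) / 4) = b\<^sup>2 * (D - \<sigma>)\<^sup>2 * (D + 3*\<sigma>) / (4 * D\<^sup>2)"
    unfolding a1_def by (simp add: power2_eq_square field_simps)
  also have "\<dots> > 0" using ne b D sg unfolding \<sigma>_def[symmetric] by (intro divide_pos_pos mult_pos_pos) auto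
  finally have "Pf b D s e0 a1 > 0" using P by simp
  then show ?thesis using sign_gt[OF s b c, of D] unfolding a1_def \<sigma>_def e0_def by simp
qed




lemma equal_case:
  assumes s: "s > 0" and b: "b > 0" and D: "D > 0" and eq: "s = D\<^sup>2"
  shows "E1 b D s a \<le> D/(2*b)"
proof -
  define e0 where "e0 = D/(2*b)"
  have e0: "e0 > 0" unfolding e0_def using b D by simp
  show ?thesis
  proof (cases "b - a*e0 > 0")
    case False
    then show ?thesis using below[OF s b e0, of a D] unfolding e0_def by simp
  next
    case True
    have se: "s = 4*b\<^sup>2*e0\<^sup>2" unfolding e0_def eq using b by (simp add: field_simps power2_eq_square)
    have "Pf b D s e0 a = a * (4*(b - a*e0)\<^sup>2*e0\<^sup>2 - s)" unfolding e0_def by (rule P_e0[OF b])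
    also have "\<dots> = - (4*e0^3) * a\<^sup>2 * (b + (b - a*e0))" unfolding se
      by (simp add: power2_eq_square power3_eq_cube algebra_simps)
    also have "\<dots> \<le> 0" using e0 True b by (intro mult_nonpos_nonneg) auto
    finally have "\<not> Pf b D s e0 a > 0" by simp
    then show ?thesis using sign_gt[OF s b True, of D] unfolding e0_def by simp
  qed
qed




lemma ce_aux2: "b > 0 \<Longrightarrow> D > 0 \<Longrightarrow> D\<^sup>2 + s > 0 \<Longrightarrow>
  (b - (2*b\<^sup>2*D/(D\<^sup>2+s))*(D/(2*b)))*(D/(2*b)) = s*D/(2*(D\<^sup>2+s))"
  for b D s :: real
  by (simp add: field_simps power2_eq_square)

lemma astar_point:
  assumes s: "s > 0" and b: "b > 0" and D: "D > 0"
  shows "E1 b D s (2*b\<^sup>2*D/(D\<^sup>2+s)) < D/(2*b)"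
proof -
  define e0 where "e0 = D/(2*b)"
  define x where "x = 2*b\<^sup>2*D/(D\<^sup>2+s)"
  have e0: "e0 > 0" unfolding e0_def using b D by simp
  have dp: "D\<^sup>2 + s > 0" using s by (simp add: add_nonneg_pos)
  have x: "x > 0" unfolding x_def using b D dp by (intro divide_pos_pos) auto
  have ce: "(b - x*e0)*e0 = s*D/(2*(D\<^sup>2+s))" unfolding x_def e0_def using b D dp by (rule ce_aux2)
  have c: "b - x*e0 > 0"
  proof -
    have "(b - x*e0)*e0 > 0" unfolding ce using s D dp by simp
    then show ?thesis using e0 by (simp add: zero_less_mult_iff)
  qed
  have q: "(s*D/(D\<^sup>2+s))\<^sup>2 < s"
  proof -
    have "(s*D/(D\<^sup>2+s))\<^sup>2 = s * (s*D\<^sup>2/(D\<^sup>2+s)\<^sup>2)" by (simp add: power2_eq_square field_simps)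
    moreover have "s*D\<^sup>2/(D\<^sup>2+s)\<^sup>2 < 1"
    proof -
      have "(D\<^sup>2+s)\<^sup>2 = s*D\<^sup>2 + (s*s + D\<^sup>2*(D\<^sup>2 + s))" by (simp add: power2_eq_square algebra_simps)
      moreover have "s*s + D\<^sup>2*(D\<^sup>2 + s) > 0" using s dp by (intro add_pos_nonneg) auto
      ultimately have "s*D\<^sup>2 < (D\<^sup>2+s)\<^sup>2" by linarith
      moreover have "(D\<^sup>2+s)\<^sup>2 > 0" using dp by simp
      ultimately show ?thesis by (simp add: divide_less_eq)
    qed
    ultimately show ?thesis using s by (metis mult_strict_left_mono mult.right_neutral)
  qed
  have "Pf b D s e0 x = x * (4*(b - x*e0)\<^sup>2*e0\<^sup>2 - s)" unfolding e0_def by (rule P_e0[OF b])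
  also have "4*(b - x*e0)\<^sup>2*e0\<^sup>2 = (2*((b - x*e0)*e0))\<^sup>2" by (simp add: power_mult_distrib)
  also have "\<dots> = (s*D/(D\<^sup>2+s))\<^sup>2"
  proof -
    have "2*(s*D/(2*(D\<^sup>2+s))) = s*D/(D\<^sup>2+s)" by (simp only: mult_divide_mult_cancel_left_if times_divide_eq_right) simp
    then show ?thesis unfolding ce by simp
  qed
  finally have "Pf b D s e0 x < 0" using q x by (simp add: mult_pos_neg)
  then have "\<not> e0 \<le> E1 b D s x" using sign_ge[OF s b c, of D] by simp
  then show ?thesis unfolding x_def e0_def by simp
qed





theorem theorem6:
  fixes b \<Delta> s :: real
  assumes "b > 0" and "\<Delta> > 0" and "s > 0"
  shows "(\<forall>a. E1 b \<Delta> s a > 0 \<longleftrightarrow> a < abar b \<Delta> s)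
       \<and> (\<exists>!a\<^sub>d. a\<^sub>d < abar b \<Delta> s \<and> (\<forall>a. a < abar b \<Delta> s \<longrightarrow> E1 b \<Delta> s a \<le> E1 b \<Delta> s a\<^sub>d))
       \<and> (\<forall>a\<^sub>d. a\<^sub>d < abar b \<Delta> s \<and> (\<forall>a. a < abar b \<Delta> s \<longrightarrow> E1 b \<Delta> s a \<le> E1 b \<Delta> s a\<^sub>d) \<longrightarrow>
            (a\<^sub>d > 0 \<longleftrightarrow> s < \<Delta>\<^sup>2) \<and> (a\<^sub>d = 0 \<longleftrightarrow> s = \<Delta>\<^sup>2) \<and> (a\<^sub>d < 0 \<longleftrightarrow> s > \<Delta>\<^sup>2)
            \<and> a\<^sub>d < 2 * b\<^sup>2 * \<Delta> / (\<Delta>\<^sup>2 + s)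
            \<and> 2 * b\<^sup>2 * \<Delta> / (\<Delta>\<^sup>2 + s) < abar b \<Delta> s)"
proof -
  note b = assms(1) and D = assms(2) and s = assms(3)
  define e0 where "e0 = \<Delta>/(2*b)"
  have e0: "e0 > 0" unfolding e0_def using b D by simp
  have E0': "E1 b \<Delta> s 0 = e0" unfolding e0_def by (rule E0)
  have ab: "abar b \<Delta> s > 0" unfolding abar_def using s b D by simp
  have P1: "\<forall>a. E1 b \<Delta> s a > 0 \<longleftrightarrow> a < abar b \<Delta> s" using pos_iff[OF s b D] by blast
  have P2: "\<exists>!a\<^sub>d. a\<^sub>d < abar b \<Delta> s \<and> (\<forall>a. a < abar b \<Delta> s \<longrightarrow> E1 b \<Delta> s a \<le> E1 b \<Delta> s a\<^sub>d)"
  proof -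
    obtain am where am: "am < abar b \<Delta> s" "\<forall>a. a < abar b \<Delta> s \<longrightarrow> E1 b \<Delta> s a \<le> E1 b \<Delta> s am"
      using exists_max[OF s b D] by blast
    show ?thesis
    proof (rule ex1I[of _ am])
      show "am < abar b \<Delta> s \<and> (\<forall>a. a < abar b \<Delta> s \<longrightarrow> E1 b \<Delta> s a \<le> E1 b \<Delta> s am)" using am by blast
    next
      fix y assume "y < abar b \<Delta> s \<and> (\<forall>a. a < abar b \<Delta> s \<longrightarrow> E1 b \<Delta> s a \<le> E1 b \<Delta> s y)"
      then show "y = am" using unique_max[OF s b D _ am(1) _ am(2)] by blast
    qed
  qed
  have P3: "a\<^sub>d < abar b \<Delta> s \<and> (\<forall>a. a < abar b \<Delta> s \<longrightarrow> E1 b \<Delta> s a \<le> E1 b \<Delta> s a\<^sub>d) \<longrightarrow>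
            (a\<^sub>d > 0 \<longleftrightarrow> s < \<Delta>\<^sup>2) \<and> (a\<^sub>d = 0 \<longleftrightarrow> s = \<Delta>\<^sup>2) \<and> (a\<^sub>d < 0 \<longleftrightarrow> s > \<Delta>\<^sup>2)
            \<and> a\<^sub>d < 2 * b\<^sup>2 * \<Delta> / (\<Delta>\<^sup>2 + s)
            \<and> 2 * b\<^sup>2 * \<Delta> / (\<Delta>\<^sup>2 + s) < abar b \<Delta> s" for a\<^sub>d
  proof
    assume H: "a\<^sub>d < abar b \<Delta> s \<and> (\<forall>a. a < abar b \<Delta> s \<longrightarrow> E1 b \<Delta> s a \<le> E1 b \<Delta> s a\<^sub>d)"
    then have adab: "a\<^sub>d < abar b \<Delta> s" and mx: "\<And>a. a < abar b \<Delta> s \<Longrightarrow> E1 b \<Delta> s a \<le> E1 b \<Delta> s a\<^sub>d"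
      by auto
    have Ead: "E1 b \<Delta> s a\<^sub>d \<ge> e0" using mx[of 0] ab E0' by simp
    define \<sigma> where "\<sigma> = sqrt s"
    define a1 where "a1 = b\<^sup>2*(\<Delta> - \<sigma>)/\<Delta>\<^sup>2"
    have sqD: "sqrt (\<Delta>\<^sup>2) = \<Delta>" using D by simp
    have gt: "a\<^sub>d > 0" if "s < \<Delta>\<^sup>2"
    proof -
      have "\<sigma> < \<Delta>" unfolding \<sigma>_def using real_sqrt_less_mono[OF that] sqD by simp
      then have ne: "sqrt s \<noteq> \<Delta>" and a1p: "a1 > 0" unfolding \<sigma>_def a1_def using b D by auto
      have Ea1: "E1 b \<Delta> s a1 > e0" using better_point[OF s b D ne] unfolding a1_def \<sigma>_def e0_def .
      then have "0 < E1 b \<Delta> s a1" using e0 by linarith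
      then have "a1 < abar b \<Delta> s" using P1 by blast
      then have le: "E1 b \<Delta> s a1 \<le> E1 b \<Delta> s a\<^sub>d" using mx by blast
      show ?thesis
      proof (rule ccontr)
        assume "\<not> a\<^sub>d > 0"
        then consider "a\<^sub>d = 0" | "a\<^sub>d < 0" by linarith
        then show False
        proof cases
          case 1 then show False using le Ea1 E0' by simp
        next
          case 2
          have "E1 b \<Delta> s 0 \<ge> E1 b \<Delta> s a1"
            using qc[OF s b _ 2 a1p, of "E1 b \<Delta> s a1" \<Delta>] Ea1 e0 le by simp
          then show False using Ea1 E0' by simp
        qed
      qed
    qed
    have lt: "a\<^sub>d < 0" if "s > \<Delta>\<^sup>2"
    proof -
      have "\<sigma> > \<Delta>" unfolding \<sigma>_def using real_sqrt_less_mono[OF that] sqD by simp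
      then have ne: "sqrt s \<noteq> \<Delta>" and a1n: "a1 < 0" unfolding \<sigma>_def a1_def using b D
        by (auto simp: divide_neg_pos mult_pos_neg)
      have Ea1: "E1 b \<Delta> s a1 > e0" using better_point[OF s b D ne] unfolding a1_def \<sigma>_def e0_def .
      then have "0 < E1 b \<Delta> s a1" using e0 by linarith
      then have "a1 < abar b \<Delta> s" using P1 by blast
      then have le: "E1 b \<Delta> s a1 \<le> E1 b \<Delta> s a\<^sub>d" using mx by blast
      show ?thesis
      proof (rule ccontr)
        assume "\<not> a\<^sub>d < 0"
        then consider "a\<^sub>d = 0" | "a\<^sub>d > 0" by linarith
        then show False
        proof cases
          case 1 then show False using le Ea1 E0' by simp
        next
          case 2
          have "E1 b \<Delta> s 0 \<ge> E1 b \<Delta> s a1"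
            using qc[OF s b _ a1n 2, of "E1 b \<Delta> s a1" \<Delta>] Ea1 e0 le by simp
          then show False using Ea1 E0' by simp
        qed
      qed
    qed
    have eq: "a\<^sub>d = 0" if "s = \<Delta>\<^sup>2"
    proof -
      have "\<forall>a. a < abar b \<Delta> s \<longrightarrow> E1 b \<Delta> s a \<le> E1 b \<Delta> s 0"
        using equal_case[OF s b D that] E0' e0_def by simp
      then show ?thesis using unique_max[OF s b D adab ab] mx by blast
    qed
    have signs: "(a\<^sub>d > 0 \<longleftrightarrow> s < \<Delta>\<^sup>2) \<and> (a\<^sub>d = 0 \<longleftrightarrow> s = \<Delta>\<^sup>2) \<and> (a\<^sub>d < 0 \<longleftrightarrow> s > \<Delta>\<^sup>2)"
    proof (cases "s < \<Delta>\<^sup>2")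
      case True then show ?thesis using gt by auto
    next
      case False
      then consider "s = \<Delta>\<^sup>2" | "s > \<Delta>\<^sup>2" by linarith
      then show ?thesis
      proof cases
        case 1 then show ?thesis using eq by auto
      next
        case 2 then show ?thesis using lt by auto
      qed
    qed
    define x where "x = 2 * b\<^sup>2 * \<Delta> / (\<Delta>\<^sup>2 + s)"
    have dp: "\<Delta>\<^sup>2 + s > 0" using s by (simp add: add_nonneg_pos)
    have x: "x > 0" unfolding x_def using b D dp by (intro divide_pos_pos) auto
    have Ex: "E1 b \<Delta> s x < e0" unfolding x_def e0_def by (rule astar_point[OF s b D])
    have bound: "a\<^sub>d < x"
    proof (rule ccontr)
      assume "\<not> a\<^sub>d < x"
      then consider "a\<^sub>d = x" | "a\<^sub>d > x" by linarith
      then show False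
      proof cases
        case 1 then show False using Ead Ex by simp
      next
        case 2
        have "E1 b \<Delta> s x \<ge> e0" using qc[OF s b e0 x 2, of \<Delta>] E0' Ead by simp
        then show False using Ex by simp
      qed
    qed
    have "2 * b\<^sup>2 * \<Delta> / (\<Delta>\<^sup>2 + s) \<le> 2 * b\<^sup>2 * \<Delta> / s"
      using b D s dp by (intro divide_left_mono) auto
    also have "\<dots> < 4 * b\<^sup>2 * \<Delta> / s"
      using b D s by (intro divide_strict_right_mono) auto
    finally have xab: "2 * b\<^sup>2 * \<Delta> / (\<Delta>\<^sup>2 + s) < abar b \<Delta> s" unfolding abar_def .
    show "(a\<^sub>d > 0 \<longleftrightarrow> s < \<Delta>\<^sup>2) \<and> (a\<^sub>d = 0 \<longleftrightarrow> s = \<Delta>\<^sup>2) \<and> (a\<^sub>d < 0 \<longleftrightarrow> s > \<Delta>\<^sup>2)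
            \<and> a\<^sub>d < 2 * b\<^sup>2 * \<Delta> / (\<Delta>\<^sup>2 + s)
            \<and> 2 * b\<^sup>2 * \<Delta> / (\<Delta>\<^sup>2 + s) < abar b \<Delta> s"
      using signs bound xab unfolding x_def by blast
  qed
  show ?thesis using P1 P2 P3 by blast
qed


end
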